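(* Let $L=(L_{ij})$ be a Latin square of order $6$ on $\{1,\dots,6\}$ whose first row is $(1,2,3,4,5,6)$, whose rows $2,3$ begin with $(2,3,1)$ and $(3,1,2)$ respectively, and whose rows $4,5,6$ begin with $(4,5,6)$, $(5,6,4)$, $(6,4,5)$ respectively (the remaining entries being arbitrary subject to $L$ being a Latin square). Let $\Psi=(\psi_{ij})$ with $\psi_{ij}=\ket{L_{ij}}$, and let $\Phi=(\phi_{ij})$ be a quantum Latin square of order $6$ orthogonal to $\Psi$ with $\phi_{1j}=\ket{j}$ for $j=1,\dots,6$. Then there exist complex numbers $a_k,b_k,c_k$ ($k=1,\dots,6$) and complex scalars $\lambda_{ij}$ ($i\in\{4,5,6\}$, $j\in\{1,2,3\}$) such that, in coordinates with respect to $\ket{1},\dots,\ket{6}$, $\phi_{41}=\lambda_{41}(0,a_2,a_3,0,a_5,a_6)$, $\phi_{42}=\lambda_{42}(b_1,0,b_3,b_4,0,b_6)$, $\phi_{43}=\lambda_{43}(c_1,c_2,0,c_4,c_5,0)$, $\phi_{51}=\lambda_{51}(0,-c_2,c_3,-c_4,0,c_6)$, $\phi_{52}=\lambda_{52}(a_1,0,-a_3,a_4,-a_5,0)$, $\phi_{53}=\lambda_{53}(-b_1,b_2,0,0,b_5,-b_6)$, $\phi_{61}=\lambda_{61}(0,b_2,b_3,b_4,b_5,0)$, $\phi_{62}=\lambda_{62}(c_1,0,c_3,0,c_5,c_6)$, $\phi_{63}=\lambda_{63}(a_1,a_2,0,a_4,0,a_6)$.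
   Context: A quantum Latin square (QLS) of order $n$ is an $n\times n$ matrix $\Psi=(\psi_{ij})_{1\le i,j\le n}$ whose entries are unit vectors in $\mathbb C^n$ such that the entries of each row and the entries of each column form an orthonormal basis of $\mathbb C^n$. Two QLS $\Psi=(\psi_{ij})$ and $\Phi=(\phi_{ij})$ of order $n$ are orthogonal if $\{\psi_{ij}\otimes\phi_{ij}: 1\le i,j\le n\}$ is an orthonormal basis of $\mathbb C^n\otimes\mathbb C^n$. $\ket{1},\dots,\ket{n}$ denotes the standard orthonormal basis of $\mathbb C^n$. *)

theory Defs
  imports Complex_Main
begin

text \<open>Vectors of \<open>\<complex>\<^sup>n\<close> are represented as functions \<open>nat \<Rightarrow> complex\<close>,
  the coordinates with respect to the standard basis \<open>|1>,...,|n>\<close> being the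
  values at \<open>1..n\<close>. Vectors of \<open>\<complex>\<^sup>n \<otimes> \<complex>\<^sup>n\<close> are functions
  \<open>nat \<times> nat \<Rightarrow> complex\<close> with coordinates at \<open>{1..n} \<times> {1..n}\<close>.\<close>

definition ket :: "nat \<Rightarrow> nat \<Rightarrow> complex" where
  "ket j = (\<lambda>k. if k = j then 1 else 0)"

definition tensor :: "(nat \<Rightarrow> complex) \<Rightarrow> (nat \<Rightarrow> complex) \<Rightarrow> (nat \<times> nat \<Rightarrow> complex)" where
  "tensor u v = (\<lambda>(k, l). u k * v l)"

definition cinner_on :: "'k set \<Rightarrow> ('k \<Rightarrow> complex) \<Rightarrow> ('k \<Rightarrow> complex) \<Rightarrow> complex" where
  "cinner_on K u v = (\<Sum>k\<in>K. cnj (u k) * v k)"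

definition orthonormal_basis_on :: "'k set \<Rightarrow> 'i set \<Rightarrow> ('i \<Rightarrow> 'k \<Rightarrow> complex) \<Rightarrow> bool" where
  "orthonormal_basis_on K I vs \<longleftrightarrow>
     (\<forall>a\<in>I. \<forall>b\<in>I. cinner_on K (vs a) (vs b) = (if a = b then 1 else 0)) \<and>
     (\<forall>w :: 'k \<Rightarrow> complex. \<exists>c :: 'i \<Rightarrow> complex. \<forall>k\<in>K. w k = (\<Sum>a\<in>I. c a * vs a k))"

definition quantum_latin_square :: "nat \<Rightarrow> (nat \<Rightarrow> nat \<Rightarrow> nat \<Rightarrow> complex) \<Rightarrow> bool" where
  "quantum_latin_square n \<Psi> \<longleftrightarrow>
     (\<forall>i\<in>{1..n}. orthonormal_basis_on {1..n} {1..n} (\<lambda>j. \<Psi> i j)) \<and>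
     (\<forall>j\<in>{1..n}. orthonormal_basis_on {1..n} {1..n} (\<lambda>i. \<Psi> i j))"

definition orthogonal_qls :: "nat \<Rightarrow> (nat \<Rightarrow> nat \<Rightarrow> nat \<Rightarrow> complex) \<Rightarrow> (nat \<Rightarrow> nat \<Rightarrow> nat \<Rightarrow> complex) \<Rightarrow> bool" where
  "orthogonal_qls n \<Psi> \<Phi> \<longleftrightarrow>
     orthonormal_basis_on ({1..n} \<times> {1..n}) ({1..n} \<times> {1..n})
       (\<lambda>(i, j). tensor (\<Psi> i j) (\<Phi> i j))"

definition latin_square :: "nat \<Rightarrow> (nat \<Rightarrow> nat \<Rightarrow> nat) \<Rightarrow> bool" where
  "latin_square n L \<longleftrightarrow>
     (\<forall>i\<in>{1..n}. bij_betw (\<lambda>j. L i j) {1..n} {1..n}) \<and>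
     (\<forall>j\<in>{1..n}. bij_betw (\<lambda>i. L i j) {1..n} {1..n})"

definition has_coords :: "(nat \<Rightarrow> complex) \<Rightarrow> complex list \<Rightarrow> bool" where
  "has_coords v xs \<longleftrightarrow> (\<forall>k\<in>{1..length xs}. v k = xs ! (k - 1))"

end

theory Submission
  imports Defs
begin

lemma onb_inner:
  assumes "orthonormal_basis_on K I vs" "a \<in> I" "b \<in> I"
  shows "cinner_on K (vs a) (vs b) = (if a = b then 1 else 0)"
  using assms unfolding orthonormal_basis_on_def by blast

lemma cinner_cong:
  assumes "\<forall>k\<in>K. u k = u' k" "\<forall>k\<in>K. v k = v' k"
  shows "cinner_on K u v = cinner_on K u' v'"
  using assms unfolding cinner_on_def by (intro sum.cong) auto

lemma cinner_ket:
  assumes "finite K" "j \<in> K"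
  shows "cinner_on K (ket j) v = v j"
proof -
  have "cinner_on K (ket j) v = (\<Sum>k\<in>K. if k = j then v k else 0)"
    unfolding cinner_on_def ket_def by (intro sum.cong) auto
  also have "\<dots> = v j" using assms by (simp add: sum.delta')
  finally show ?thesis .
qed

lemma cinner_ket2:
  assumes "finite K" "j \<in> K"
  shows "cinner_on K v (\<lambda>m. if m = j then 1 else 0) = cnj (v j)"
proof -
  have "cinner_on K v (\<lambda>m. if m = j then 1 else 0) = (\<Sum>k\<in>K. if k = j then cnj (v k) else 0)"
    unfolding cinner_on_def by (intro sum.cong) auto
  also have "\<dots> = cnj (v j)" using assms by (simp add: sum.delta')
  finally show ?thesis .
qed

lemma onb_complete:
  assumes onb: "orthonormal_basis_on K I vs" and fK: "finite K" and fI: "finite I"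
    and k: "k \<in> K" and l: "l \<in> K"
  shows "(\<Sum>a\<in>I. vs a k * cnj (vs a l)) = (if k = l then 1 else 0)"
proof -
  have sp: "\<forall>w. \<exists>c. \<forall>m\<in>K. w m = (\<Sum>a\<in>I. c a * vs a m)"
    using onb unfolding orthonormal_basis_on_def by blast
  obtain c where hc: "\<forall>m\<in>K. (\<lambda>m. if m = l then 1 else 0) m = (\<Sum>a\<in>I. c a * vs a m)"
    using spec[OF sp, of "\<lambda>m. if m = l then 1 else 0"] by blast
  have cb: "c b = cnj (vs b l)" if b: "b \<in> I" for b
  proof -
    have "cnj (vs b l) = cinner_on K (vs b) (\<lambda>m. if m = l then 1 else 0)" using cinner_ket2[OF fK l] by simp
    also have "\<dots> = (\<Sum>m\<in>K. cnj (vs b m) * (\<Sum>a\<in>I. c a * vs a m))"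
      unfolding cinner_on_def using hc by (intro sum.cong) auto
    also have "\<dots> = (\<Sum>a\<in>I. c a * cinner_on K (vs b) (vs a))"
      unfolding cinner_on_def sum_distrib_left
      by (subst sum.swap) (simp add: mult_ac)
    also have "\<dots> = (\<Sum>a\<in>I. if a = b then c a else 0)"
      using onb_inner[OF onb b] by (intro sum.cong) auto
    also have "\<dots> = c b" using fI b by (simp add: sum.delta')
    finally show ?thesis by simp
  qed
  have "(\<Sum>a\<in>I. vs a k * cnj (vs a l)) = (\<Sum>a\<in>I. c a * vs a k)"
    using cb by (intro sum.cong) (auto simp: mult_ac)
  also have "\<dots> = (if k = l then 1 else 0)" using bspec[OF hc k] by simp
  finally show ?thesis .
qed

lemma apply_frame:
  assumes fK: "finite K" and fJ: "finite J"
    and G: "\<forall>k\<in>K. \<forall>l\<in>K. (\<Sum>t\<in>J. u t k * cnj (u t l)) = c * (if k = l then 1 else 0)"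
    and k: "k \<in> K"
  shows "(\<Sum>t\<in>J. u t k * cinner_on K (u t) v) = c * v k"
proof -
  have "(\<Sum>t\<in>J. u t k * cinner_on K (u t) v) = (\<Sum>l\<in>K. (\<Sum>t\<in>J. u t k * cnj (u t l)) * v l)"
    unfolding cinner_on_def sum_distrib_left sum_distrib_right
    by (subst sum.swap) (simp add: mult_ac)
  also have "\<dots> = (\<Sum>l\<in>K. if l = k then c * v l else 0)"
    using G k by (intro sum.cong) auto
  also have "\<dots> = c * v k" using fK k by (simp add: sum.delta')
  finally show ?thesis .
qed

lemma tensor_inner:
  assumes fK: "finite K" and s: "s \<in> K"
  shows "cinner_on (K \<times> K) (tensor (ket s) u) (tensor (ket s) v) = cinner_on K u v"
proof -
  have "cinner_on (K \<times> K) (tensor (ket s) u) (tensor (ket s) v)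
      = (\<Sum>a\<in>K. \<Sum>b\<in>K. cnj (ket s a * u b) * (ket s a * v b))"
    unfolding cinner_on_def tensor_def by (subst sum.cartesian_product) (simp add: case_prod_unfold)
  also have "\<dots> = (\<Sum>a\<in>K. if a = s then cinner_on K u v else 0)"
    unfolding cinner_on_def ket_def by (intro sum.cong) auto
  also have "\<dots> = cinner_on K u v" using fK s by (simp add: sum.delta')
  finally show ?thesis .
qed

lemma cinner_cnj: "cinner_on K v u = cnj (cinner_on K u v)"
  unfolding cinner_on_def by (simp add: mult_ac)

lemma group_rel:
  assumes fK: "finite K"
    and h1: "\<forall>k\<in>K. 3/2 * v1 k = v1 k * cinner_on K v1 v1 + v2 k * cinner_on K v2 v1 + v3 k * cinner_on K v3 v1"
    and h2: "\<forall>k\<in>K. 3/2 * v2 k = v1 k * cinner_on K v1 v2 + v2 k * cinner_on K v2 v2 + v3 k * cinner_on K v3 v2"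
    and h3: "\<forall>k\<in>K. 3/2 * v3 k = v1 k * cinner_on K v1 v3 + v2 k * cinner_on K v2 v3 + v3 k * cinner_on K v3 v3"
    and n1: "cinner_on K v1 v1 = 1" and n2: "cinner_on K v2 v2 = 1" and n3: "cinner_on K v3 v3 = 1"
  shows "\<exists>\<alpha> \<beta>. \<alpha> \<noteq> 0 \<and> \<beta> \<noteq> 0 \<and> (\<forall>k\<in>K. v3 k = \<alpha> * v1 k + \<beta> * v2 k)"
proof -
  define g12 where "g12 = cinner_on K v1 v2"
  define g13 where "g13 = cinner_on K v1 v3"
  define g23 where "g23 = cinner_on K v2 v3"
  have c21: "cinner_on K v2 v1 = cnj g12" unfolding g12_def by (rule cinner_cnj)
  have c31: "cinner_on K v3 v1 = cnj g13" unfolding g13_def by (rule cinner_cnj)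
  have c32: "cinner_on K v3 v2 = cnj g23" unfolding g23_def by (rule cinner_cnj)
  have e1: "\<forall>k\<in>K. v1 k = 2 * (v2 k * cnj g12 + v3 k * cnj g13)"
    using h1 n1 c21 c31 by (auto simp: field_simps)
  have e2: "\<forall>k\<in>K. v2 k = 2 * (v1 k * g12 + v3 k * cnj g23)"
    using h2 n2 c32 g12_def by (auto simp: field_simps)
  have e3: "\<forall>k\<in>K. v3 k = 2 * (v1 k * g13 + v2 k * g23)"
    using h3 n3 g13_def g23_def by (auto simp: field_simps)
  have zero: "cinner_on K w w \<noteq> 0" if "\<forall>k\<in>K. w k = 0" "cinner_on K w w = 1" for w
    using that unfolding cinner_on_def by simp
  have scal: "cinner_on K (\<lambda>k. a * w k) (\<lambda>k. b * w k) = cnj a * b * cinner_on K w w" for a b w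
    unfolding cinner_on_def sum_distrib_left by (intro sum.cong) (auto simp: mult_ac)
  have g13nz: "g13 \<noteq> 0"
  proof
    assume g: "g13 = 0"
    have a1: "\<forall>k\<in>K. v1 k = 2 * cnj g12 * v2 k" using e1 g by (auto simp: mult_ac)
    have a3: "\<forall>k\<in>K. v3 k = 2 * g23 * v2 k" using e3 g by (auto simp: mult_ac)
    have "g13 = cinner_on K (\<lambda>k. 2 * cnj g12 * v2 k) (\<lambda>k. 2 * g23 * v2 k)"
      unfolding g13_def by (rule cinner_cong) (use a1 a3 in auto)
    also have "\<dots> = 4 * g12 * g23" using scal n2 by simp
    finally have "g12 = 0 \<or> g23 = 0" using g by simp
    then show False
    proof
      assume "g12 = 0"
      then have "\<forall>k\<in>K. v1 k = 0" using a1 by simp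
      then show False using n1 unfolding cinner_on_def by simp
    next
      assume "g23 = 0"
      then have "\<forall>k\<in>K. v3 k = 0" using a3 by simp
      then show False using n3 unfolding cinner_on_def by simp
    qed
  qed
  have g23nz: "g23 \<noteq> 0"
  proof
    assume g: "g23 = 0"
    have a2: "\<forall>k\<in>K. v2 k = 2 * g12 * v1 k" using e2 g by (auto simp: mult_ac)
    have a3: "\<forall>k\<in>K. v3 k = 2 * g13 * v1 k" using e3 g by (auto simp: mult_ac)
    have "g23 = cinner_on K (\<lambda>k. 2 * g12 * v1 k) (\<lambda>k. 2 * g13 * v1 k)"
      unfolding g23_def by (rule cinner_cong) (use a2 a3 in auto)
    also have "\<dots> = 4 * cnj g12 * g13" using scal n1 by simp
    finally have "g12 = 0 \<or> g13 = 0" using g by simp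
    then show False
    proof
      assume "g12 = 0"
      then have "\<forall>k\<in>K. v2 k = 0" using a2 by simp
      then show False using n2 unfolding cinner_on_def by simp
    next
      assume "g13 = 0"
      then show False using g13nz by simp
    qed
  qed
  show ?thesis
    by (rule exI[of _ "2 * g13"], rule exI[of _ "2 * g23"]) (use g13nz g23nz e3 in \<open>auto simp: algebra_simps\<close>)
qed

lemma hc6: "has_coords v [x1, x2, x3, x4, x5, x6] \<longleftrightarrow>
   v 1 = x1 \<and> v 2 = x2 \<and> v 3 = x3 \<and> v 4 = x4 \<and> v 5 = x5 \<and> v 6 = x6"
proof -
  have "{1..length [x1, x2, x3, x4, x5, x6]} = {1,2,3,4,5,6::nat}" by auto
  then show ?thesis unfolding has_coords_def by (simp add: numeral_eq_Suc)
qed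

lemma K6: "{1..6::nat} = {1,2,3,4,5,6}" by auto

theorem mainTheorem13:
  fixes L :: "nat \<Rightarrow> nat \<Rightarrow> nat" and \<Phi> :: "nat \<Rightarrow> nat \<Rightarrow> nat \<Rightarrow> complex"
  assumes "latin_square 6 L"
    and "\<forall>j\<in>{1..6}. L 1 j = j"
    and "L 2 1 = 2" "L 2 2 = 3" "L 2 3 = 1"
    and "L 3 1 = 3" "L 3 2 = 1" "L 3 3 = 2"
    and "L 4 1 = 4" "L 4 2 = 5" "L 4 3 = 6"
    and "L 5 1 = 5" "L 5 2 = 6" "L 5 3 = 4"
    and "L 6 1 = 6" "L 6 2 = 4" "L 6 3 = 5"
    and "quantum_latin_square 6 \<Phi>"
    and "orthogonal_qls 6 (\<lambda>i j. ket (L i j)) \<Phi>"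
    and "\<forall>j\<in>{1..6}. \<forall>k\<in>{1..6}. \<Phi> 1 j k = ket j k"
  shows "\<exists>(a :: nat \<Rightarrow> complex) (b :: nat \<Rightarrow> complex) (c :: nat \<Rightarrow> complex)
           (lam :: nat \<Rightarrow> nat \<Rightarrow> complex).
     has_coords (\<Phi> 4 1) (map ((*) (lam 4 1)) [0, a 2, a 3, 0, a 5, a 6]) \<and>
     has_coords (\<Phi> 4 2) (map ((*) (lam 4 2)) [b 1, 0, b 3, b 4, 0, b 6]) \<and>
     has_coords (\<Phi> 4 3) (map ((*) (lam 4 3)) [c 1, c 2, 0, c 4, c 5, 0]) \<and>
     has_coords (\<Phi> 5 1) (map ((*) (lam 5 1)) [0, - c 2, c 3, - c 4, 0, c 6]) \<and>
     has_coords (\<Phi> 5 2) (map ((*) (lam 5 2)) [a 1, 0, - a 3, a 4, - a 5, 0]) \<and>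
     has_coords (\<Phi> 5 3) (map ((*) (lam 5 3)) [- b 1, b 2, 0, 0, b 5, - b 6]) \<and>
     has_coords (\<Phi> 6 1) (map ((*) (lam 6 1)) [0, b 2, b 3, b 4, b 5, 0]) \<and>
     has_coords (\<Phi> 6 2) (map ((*) (lam 6 2)) [c 1, 0, c 3, 0, c 5, c 6]) \<and>
     has_coords (\<Phi> 6 3) (map ((*) (lam 6 3)) [a 1, a 2, 0, a 4, 0, a 6])"
proof -
  define K where "K = {1..6::nat}"
  have fK: "finite K" unfolding K_def by simp
  note KK = K_def K6
  have qls_r: "\<forall>i\<in>K. orthonormal_basis_on K K (\<lambda>j. \<Phi> i j)"
    and qls_c: "\<forall>j\<in>K. orthonormal_basis_on K K (\<lambda>i. \<Phi> i j)"
    using assms(18) unfolding quantum_latin_square_def K_def by auto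
  have oq: "orthonormal_basis_on (K \<times> K) (K \<times> K) (\<lambda>(i, j). tensor (ket (L i j)) (\<Phi> i j))"
    using assms(19) unfolding orthogonal_qls_def K_def by simp
  have lat_r: "\<forall>i\<in>K. bij_betw (\<lambda>j. L i j) K K" and lat_c: "\<forall>j\<in>K. bij_betw (\<lambda>i. L i j) K K"
    using assms(1) unfolding latin_square_def K_def by auto
  have LK: "L i j \<in> K" if "i \<in> K" "j \<in> K" for i j
    using lat_r that bij_betwE by blast
  have rinj: "j = j'" if "i \<in> K" "j \<in> K" "j' \<in> K" "L i j = L i j'" for i j j'
    using lat_r that unfolding bij_betw_def inj_on_def by blast
  have cinj: "i = i'" if "i \<in> K" "i' \<in> K" "j \<in> K" "L i j = L i' j" for i i' j
    using lat_c that unfolding bij_betw_def inj_on_def by blast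
  have nrm: "cinner_on K (\<Phi> i j) (\<Phi> i j) = 1" if "i \<in> K" "j \<in> K" for i j
    using onb_inner[OF bspec[OF qls_r that(1)] that(2) that(2)] by simp
  have ro: "cinner_on K (\<Phi> i j) (\<Phi> i j') = 0" if "i \<in> K" "j \<in> K" "j' \<in> K" "j \<noteq> j'" for i j j'
    using onb_inner[OF bspec[OF qls_r that(1)] that(2) that(3)] that(4) by simp
  have co: "cinner_on K (\<Phi> i j) (\<Phi> i' j) = 0" if "i \<in> K" "i' \<in> K" "j \<in> K" "i \<noteq> i'" for i i' j
    using onb_inner[OF bspec[OF qls_c that(3)] that(1) that(2)] that(4) by simp
  have so: "cinner_on K (\<Phi> i j) (\<Phi> i' j') = 0"
    if "i \<in> K" "j \<in> K" "i' \<in> K" "j' \<in> K" "(i, j) \<noteq> (i', j')" "L i j = L i' j'" for i j i' j'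
  proof -
    have "cinner_on (K \<times> K) (tensor (ket (L i j)) (\<Phi> i j)) (tensor (ket (L i' j')) (\<Phi> i' j')) = 0"
      using onb_inner[OF oq, of "(i, j)" "(i', j')"] that by simp
    then show ?thesis using tensor_inner[OF fK LK[OF that(1,2)]] that(6) by simp
  qed
  have row1: "cinner_on K (\<Phi> 1 j) v = v j" if "j \<in> K" for j v
  proof -
    have "cinner_on K (\<Phi> 1 j) v = cinner_on K (ket j) v"
      by (rule cinner_cong) (use assms(20) that in \<open>auto simp: K_def\<close>)
    then show ?thesis using cinner_ket[OF fK that] by simp
  qed
  have K1: "1 \<in> K" unfolding K_def by simp
  have zc: "\<Phi> i j j = 0" if "i \<in> K" "j \<in> K" "i \<noteq> 1" for i j
    using co[OF K1 that(1) that(2)] that row1[OF that(2)] by simp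
  have zs: "\<Phi> i j (L i j) = 0" if "i \<in> K" "j \<in> K" "i \<noteq> 1" for i j
  proof -
    have s: "L i j \<in> K" using LK that by simp
    have "L 1 (L i j) = L i j" using assms(2) s unfolding K_def by simp
    then have "cinner_on K (\<Phi> 1 (L i j)) (\<Phi> i j) = 0"
      using so[OF K1 s that(1) that(2)] that(3) by simp
    then show ?thesis using row1[OF s] by simp
  qed
  note Lv = assms(3-17)
  have Lr1: "L 1 j = j" if "j \<in> K" for j using assms(2) that unfolding K_def by simp
  have zeros: "\<Phi> 4 1 1 = 0" "\<Phi> 4 1 4 = 0" "\<Phi> 4 2 2 = 0" "\<Phi> 4 2 5 = 0" "\<Phi> 4 3 3 = 0" "\<Phi> 4 3 6 = 0"
    "\<Phi> 5 1 1 = 0" "\<Phi> 5 1 5 = 0" "\<Phi> 5 2 2 = 0" "\<Phi> 5 2 6 = 0" "\<Phi> 5 3 3 = 0" "\<Phi> 5 3 4 = 0"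
    "\<Phi> 6 1 1 = 0" "\<Phi> 6 1 6 = 0" "\<Phi> 6 2 2 = 0" "\<Phi> 6 2 4 = 0" "\<Phi> 6 3 3 = 0" "\<Phi> 6 3 5 = 0"
    using zc[of 4 1] zs[of 4 1] zc[of 4 2] zs[of 4 2] zc[of 4 3] zs[of 4 3]
      zc[of 5 1] zs[of 5 1] zc[of 5 2] zs[of 5 2] zc[of 5 3] zs[of 5 3]
      zc[of 6 1] zs[of 6 1] zc[of 6 2] zs[of 6 2] zc[of 6 3] zs[of 6 3]
    by (simp_all add: K_def Lv Lv[unfolded One_nat_def])
  have rowc: "(\<Sum>j\<in>K. \<Phi> i j k * cnj (\<Phi> i j l)) = (if k = l then 1 else 0)"
    if "i \<in> K" "k \<in> K" "l \<in> K" for i k l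
    using onb_complete[OF bspec[OF qls_r that(1)] fK fK that(2,3)] .
  have colc: "(\<Sum>i\<in>K. \<Phi> i j k * cnj (\<Phi> i j l)) = (if k = l then 1 else 0)"
    if "j \<in> K" "k \<in> K" "l \<in> K" for j k l
    using onb_complete[OF bspec[OF qls_c that(1)] fK fK that(2,3)] .
  have symc: "(\<Sum>p\<in>K \<times> K. if L (fst p) (snd p) = s then \<Phi> (fst p) (snd p) k * cnj (\<Phi> (fst p) (snd p) l) else 0)
      = (if k = l then 1 else 0)" if "s \<in> K" "k \<in> K" "l \<in> K" for s k l
  proof -
    have "(\<Sum>p\<in>K \<times> K. (case p of (i, j) \<Rightarrow> tensor (ket (L i j)) (\<Phi> i j)) (s, k) *
        cnj ((case p of (i, j) \<Rightarrow> tensor (ket (L i j)) (\<Phi> i j)) (s, l))) = (if (s, k) = (s, l) then 1 else 0)"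
      using onb_complete[OF oq] fK that by simp
    moreover have "(\<Sum>p\<in>K \<times> K. (case p of (i, j) \<Rightarrow> tensor (ket (L i j)) (\<Phi> i j)) (s, k) *
        cnj ((case p of (i, j) \<Rightarrow> tensor (ket (L i j)) (\<Phi> i j)) (s, l)))
      = (\<Sum>p\<in>K \<times> K. if L (fst p) (snd p) = s then \<Phi> (fst p) (snd p) k * cnj (\<Phi> (fst p) (snd p) l) else 0)"
      by (intro sum.cong) (auto simp: tensor_def ket_def)
    ultimately show ?thesis by simp
  qed
  have ne: "L i j \<noteq> L i j'" if "i \<in> K" "j \<in> K" "j' \<in> K" "j \<noteq> j'" for i j j'
    using rinj that by blast
  have cne: "L i j \<noteq> L i' j" if "i \<in> K" "i' \<in> K" "j \<in> K" "i \<noteq> i'" for i i' j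
    using cinj that by blast
  have UR: "L i j \<in> {4,5,6}" if "i \<in> {1,2,3}" "j \<in> {4,5,6}" for i j
  proof -
    have ij: "i \<in> K" "j \<in> K" using that by (auto simp: K_def)
    have "L i j \<noteq> L i 1" "L i j \<noteq> L i 2" "L i j \<noteq> L i 3"
      using ne[OF ij, of 1] ne[OF ij, of 2] ne[OF ij, of 3] that by (auto simp: K_def)
    moreover have "L i j \<in> K" using LK ij by simp
    ultimately show ?thesis using that Lv Lr1 by (auto simp: K_def)
  qed
  have LR: "L i j \<notin> {4,5,6}" if "i \<in> {4,5,6}" "j \<in> {4,5,6}" for i j
  proof -
    have ij: "i \<in> K" "j \<in> K" using that by (auto simp: K_def)
    have "L i j \<noteq> L 1 j" "L i j \<noteq> L 2 j" "L i j \<noteq> L 3 j"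
      using cne[OF ij(1) _ ij(2), of 1] cne[OF ij(1) _ ij(2), of 2] cne[OF ij(1) _ ij(2), of 3] that
      by (auto simp: K_def)
    moreover have "L 1 j \<noteq> L 2 j" "L 1 j \<noteq> L 3 j" "L 2 j \<noteq> L 3 j"
      using cne[of 1 2 j] cne[of 1 3 j] cne[of 2 3 j] ij by (auto simp: K_def)
    moreover have "L 1 j \<in> {4,5,6}" "L 2 j \<in> {4,5,6}" "L 3 j \<in> {4,5,6}"
      using UR[of 1 j] UR[of 2 j] UR[of 3 j] that by auto
    ultimately show ?thesis by auto
  qed
  have region: "(L i j \<in> {4,5,6}) \<longleftrightarrow> (i \<le> 3 \<and> 4 \<le> j) \<or> (4 \<le> i \<and> j \<le> 3)"
    if "i \<in> K" "j \<in> K" for i j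
  proof -
    have "i \<in> {1,2,3} \<or> i \<in> {4,5,6}" "j \<in> {1,2,3} \<or> j \<in> {4,5,6}" using that by (auto simp: K_def)
    then show ?thesis using UR[of i j] LR[of i j] Lv Lr1[of j] that
      by (auto simp: K_def)
  qed
  have LLid: "(\<Sum>i\<in>{4,5,6}. \<Sum>j\<in>{1,2,3}. \<Phi> i j k * cnj (\<Phi> i j l)) = 3/2 * (if k = l then 1 else 0)"
    if "k \<in> K" "l \<in> K" for k l
  proof -
    define f where "f = (\<lambda>i j. \<Phi> i j k * cnj (\<Phi> i j l))"
    define d where "d = (if k = l then 1 else 0 :: complex)"
    have R: "(\<Sum>i\<in>K. \<Sum>j\<in>K. if i \<le> 3 then f i j else 0) = 3 * d"
    proof -
      have "(\<Sum>i\<in>K. \<Sum>j\<in>K. if i \<le> 3 then f i j else 0) = (\<Sum>i\<in>K. if i \<le> 3 then d else 0)"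
        by (intro sum.cong refl) (use rowc that in \<open>auto simp: f_def d_def\<close>)
      then show ?thesis by (unfold K_def K6, simp)
    qed
    have C: "(\<Sum>i\<in>K. \<Sum>j\<in>K. if j \<le> 3 then f i j else 0) = 3 * d"
    proof -
      have "(\<Sum>i\<in>K. \<Sum>j\<in>K. if j \<le> 3 then f i j else 0) = (\<Sum>j\<in>K. \<Sum>i\<in>K. if j \<le> 3 then f i j else 0)"
        by (rule sum.swap)
      also have "\<dots> = (\<Sum>j\<in>K. if j \<le> 3 then d else 0)"
        by (intro sum.cong refl) (use colc that in \<open>auto simp: f_def d_def\<close>)
      finally show ?thesis by (unfold K_def K6, simp)
    qed
    have S: "(\<Sum>i\<in>K. \<Sum>j\<in>K. if L i j \<in> {4,5,6} then f i j else 0) = 3 * d"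
    proof -
      have "(\<Sum>s\<in>{4,5,6}. \<Sum>p\<in>K \<times> K. if L (fst p) (snd p) = s then f (fst p) (snd p) else 0)
          = (\<Sum>s\<in>{4::nat,5,6}. d)"
      proof (intro sum.cong refl)
        fix s :: nat assume "s \<in> {4,5,6}"
        then have "s \<in> K" by (auto simp: K_def)
        from symc[OF this that] show "(\<Sum>p\<in>K \<times> K. if L (fst p) (snd p) = s then f (fst p) (snd p) else 0) = d"
          unfolding f_def d_def .
      qed
      moreover have "(\<Sum>s\<in>{4,5,6}. \<Sum>p\<in>K \<times> K. if L (fst p) (snd p) = s then f (fst p) (snd p) else 0)
          = (\<Sum>p\<in>K \<times> K. \<Sum>s\<in>{4,5,6}. if L (fst p) (snd p) = s then f (fst p) (snd p) else 0)"
        by (rule sum.swap)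
      moreover have "\<dots> = (\<Sum>p\<in>K \<times> K. if L (fst p) (snd p) \<in> {4,5,6} then f (fst p) (snd p) else 0)"
        by (intro sum.cong refl) auto
      moreover have "\<dots> = (\<Sum>i\<in>K. \<Sum>j\<in>K. if L i j \<in> {4,5,6} then f i j else 0)"
        by (simp add: sum.cartesian_product case_prod_unfold)
      ultimately show ?thesis by simp
    qed
    have "(\<Sum>i\<in>K. \<Sum>j\<in>K. if 4 \<le> i \<and> j \<le> 3 then f i j else 0)
        = (\<Sum>i\<in>K. \<Sum>j\<in>K. ((if j \<le> 3 then f i j else 0) + (if L i j \<in> {4,5,6} then f i j else 0)
              - (if i \<le> 3 then f i j else 0)) / 2)"
      by (intro sum.cong refl) (use region in auto)
    also have "\<dots> = (C' + S' - R') / 2" if "C' = (\<Sum>i\<in>K. \<Sum>j\<in>K. if j \<le> 3 then f i j else 0)"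
       "S' = (\<Sum>i\<in>K. \<Sum>j\<in>K. if L i j \<in> {4,5,6} then f i j else 0)" "R' = (\<Sum>i\<in>K. \<Sum>j\<in>K. if i \<le> 3 then f i j else 0)"
       for C' S' R'
      unfolding that sum_divide_distrib[symmetric] sum.distrib sum_subtractf by simp
    finally have "(\<Sum>i\<in>K. \<Sum>j\<in>K. if 4 \<le> i \<and> j \<le> 3 then f i j else 0) = 3/2 * d"
      using R C S by simp
    moreover have "(\<Sum>i\<in>K. \<Sum>j\<in>K. if 4 \<le> i \<and> j \<le> 3 then f i j else 0) = (\<Sum>i\<in>{4,5,6}. \<Sum>j\<in>{1,2,3}. f i j)"
      by (unfold K_def K6, simp)
    ultimately show ?thesis by (simp add: f_def d_def)
  qed
  have Kmem: "1 \<in> K" "2 \<in> K" "3 \<in> K" "4 \<in> K" "5 \<in> K" "6 \<in> K" by (auto simp: K_def)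
  have Jeq: "(\<Sum>t\<in>{4,5,6}\<times>{1,2,3}. h (fst t) (snd t)) = (\<Sum>i\<in>{4,5,6}. \<Sum>j\<in>{1,2,3}. h i j)"
    for h :: "nat \<Rightarrow> nat \<Rightarrow> complex"
    by (simp add: sum.cartesian_product case_prod_unfold)
  have fr: "3/2 * v k = \<Phi> 4 1 k * cinner_on K (\<Phi> 4 1) v + \<Phi> 4 2 k * cinner_on K (\<Phi> 4 2) v + \<Phi> 4 3 k * cinner_on K (\<Phi> 4 3) v + \<Phi> 5 1 k * cinner_on K (\<Phi> 5 1) v + \<Phi> 5 2 k * cinner_on K (\<Phi> 5 2) v + \<Phi> 5 3 k * cinner_on K (\<Phi> 5 3) v + \<Phi> 6 1 k * cinner_on K (\<Phi> 6 1) v + \<Phi> 6 2 k * cinner_on K (\<Phi> 6 2) v + \<Phi> 6 3 k * cinner_on K (\<Phi> 6 3) v" if "k \<in> K" for k v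
  proof -
    have "(\<Sum>t\<in>{4::nat,5,6}\<times>{1::nat,2,3}. \<Phi> (fst t) (snd t) k * cinner_on K (\<Phi> (fst t) (snd t)) v) = 3/2 * v k"
    proof (rule apply_frame[OF fK, where u = "\<lambda>t. \<Phi> (fst t) (snd t)"])
      show "finite ({4::nat,5,6}\<times>{1::nat,2,3})" by simp
      show "k \<in> K" by (rule that)
      show "\<forall>k\<in>K. \<forall>l\<in>K. (\<Sum>t\<in>{4,5,6}\<times>{1,2,3}. \<Phi> (fst t) (snd t) k * cnj (\<Phi> (fst t) (snd t) l)) = 3/2 * (if k = l then 1 else 0)"
      proof (intro ballI)
        fix k l assume kl: "k \<in> K" "l \<in> K"
        show "(\<Sum>t\<in>{4,5,6}\<times>{1,2,3}. \<Phi> (fst t) (snd t) k * cnj (\<Phi> (fst t) (snd t) l)) = 3/2 * (if k = l then 1 else 0)"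
          unfolding Jeq[of "\<lambda>i j. \<Phi> i j k * cnj (\<Phi> i j l)"] by (rule LLid[OF kl])
      qed
    qed
    then show ?thesis using Jeq[of "\<lambda>i j. \<Phi> i j k * cinner_on K (\<Phi> i j) v"] by (simp add: add.assoc)
  qed
  have o1: "cinner_on K (\<Phi> 4 2) (\<Phi> 4 1) = 0" by (rule ro) (simp_all add: Kmem Lv Kmem[unfolded One_nat_def] Lv[unfolded One_nat_def])
  have o2: "cinner_on K (\<Phi> 4 3) (\<Phi> 4 1) = 0" by (rule ro) (simp_all add: Kmem Lv Kmem[unfolded One_nat_def] Lv[unfolded One_nat_def])
  have o3: "cinner_on K (\<Phi> 5 1) (\<Phi> 4 1) = 0" by (rule co) (simp_all add: Kmem Lv Kmem[unfolded One_nat_def] Lv[unfolded One_nat_def])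
  have o4: "cinner_on K (\<Phi> 5 3) (\<Phi> 4 1) = 0" by (rule so) (simp_all add: Kmem Lv Kmem[unfolded One_nat_def] Lv[unfolded One_nat_def])
  have o5: "cinner_on K (\<Phi> 6 1) (\<Phi> 4 1) = 0" by (rule co) (simp_all add: Kmem Lv Kmem[unfolded One_nat_def] Lv[unfolded One_nat_def])
  have o6: "cinner_on K (\<Phi> 6 2) (\<Phi> 4 1) = 0" by (rule so) (simp_all add: Kmem Lv Kmem[unfolded One_nat_def] Lv[unfolded One_nat_def])
  have o7: "cinner_on K (\<Phi> 4 2) (\<Phi> 5 2) = 0" by (rule co) (simp_all add: Kmem Lv Kmem[unfolded One_nat_def] Lv[unfolded One_nat_def])
  have o8: "cinner_on K (\<Phi> 4 3) (\<Phi> 5 2) = 0" by (rule so) (simp_all add: Kmem Lv Kmem[unfolded One_nat_def] Lv[unfolded One_nat_def])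
  have o9: "cinner_on K (\<Phi> 5 1) (\<Phi> 5 2) = 0" by (rule ro) (simp_all add: Kmem Lv Kmem[unfolded One_nat_def] Lv[unfolded One_nat_def])
  have o10: "cinner_on K (\<Phi> 5 3) (\<Phi> 5 2) = 0" by (rule ro) (simp_all add: Kmem Lv Kmem[unfolded One_nat_def] Lv[unfolded One_nat_def])
  have o11: "cinner_on K (\<Phi> 6 1) (\<Phi> 5 2) = 0" by (rule so) (simp_all add: Kmem Lv Kmem[unfolded One_nat_def] Lv[unfolded One_nat_def])
  have o12: "cinner_on K (\<Phi> 6 2) (\<Phi> 5 2) = 0" by (rule co) (simp_all add: Kmem Lv Kmem[unfolded One_nat_def] Lv[unfolded One_nat_def])
  have o13: "cinner_on K (\<Phi> 4 2) (\<Phi> 6 3) = 0" by (rule so) (simp_all add: Kmem Lv Kmem[unfolded One_nat_def] Lv[unfolded One_nat_def])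
  have o14: "cinner_on K (\<Phi> 4 3) (\<Phi> 6 3) = 0" by (rule co) (simp_all add: Kmem Lv Kmem[unfolded One_nat_def] Lv[unfolded One_nat_def])
  have o15: "cinner_on K (\<Phi> 5 1) (\<Phi> 6 3) = 0" by (rule so) (simp_all add: Kmem Lv Kmem[unfolded One_nat_def] Lv[unfolded One_nat_def])
  have o16: "cinner_on K (\<Phi> 5 3) (\<Phi> 6 3) = 0" by (rule co) (simp_all add: Kmem Lv Kmem[unfolded One_nat_def] Lv[unfolded One_nat_def])
  have o17: "cinner_on K (\<Phi> 6 1) (\<Phi> 6 3) = 0" by (rule ro) (simp_all add: Kmem Lv Kmem[unfolded One_nat_def] Lv[unfolded One_nat_def])
  have o18: "cinner_on K (\<Phi> 6 2) (\<Phi> 6 3) = 0" by (rule ro) (simp_all add: Kmem Lv Kmem[unfolded One_nat_def] Lv[unfolded One_nat_def])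
  have o19: "cinner_on K (\<Phi> 4 1) (\<Phi> 4 2) = 0" by (rule ro) (simp_all add: Kmem Lv Kmem[unfolded One_nat_def] Lv[unfolded One_nat_def])
  have o20: "cinner_on K (\<Phi> 4 3) (\<Phi> 4 2) = 0" by (rule ro) (simp_all add: Kmem Lv Kmem[unfolded One_nat_def] Lv[unfolded One_nat_def])
  have o21: "cinner_on K (\<Phi> 5 1) (\<Phi> 4 2) = 0" by (rule so) (simp_all add: Kmem Lv Kmem[unfolded One_nat_def] Lv[unfolded One_nat_def])
  have o22: "cinner_on K (\<Phi> 5 2) (\<Phi> 4 2) = 0" by (rule co) (simp_all add: Kmem Lv Kmem[unfolded One_nat_def] Lv[unfolded One_nat_def])
  have o23: "cinner_on K (\<Phi> 6 2) (\<Phi> 4 2) = 0" by (rule co) (simp_all add: Kmem Lv Kmem[unfolded One_nat_def] Lv[unfolded One_nat_def])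
  have o24: "cinner_on K (\<Phi> 6 3) (\<Phi> 4 2) = 0" by (rule so) (simp_all add: Kmem Lv Kmem[unfolded One_nat_def] Lv[unfolded One_nat_def])
  have o25: "cinner_on K (\<Phi> 4 1) (\<Phi> 5 3) = 0" by (rule so) (simp_all add: Kmem Lv Kmem[unfolded One_nat_def] Lv[unfolded One_nat_def])
  have o26: "cinner_on K (\<Phi> 4 3) (\<Phi> 5 3) = 0" by (rule co) (simp_all add: Kmem Lv Kmem[unfolded One_nat_def] Lv[unfolded One_nat_def])
  have o27: "cinner_on K (\<Phi> 5 1) (\<Phi> 5 3) = 0" by (rule ro) (simp_all add: Kmem Lv Kmem[unfolded One_nat_def] Lv[unfolded One_nat_def])
  have o28: "cinner_on K (\<Phi> 5 2) (\<Phi> 5 3) = 0" by (rule ro) (simp_all add: Kmem Lv Kmem[unfolded One_nat_def] Lv[unfolded One_nat_def])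
  have o29: "cinner_on K (\<Phi> 6 2) (\<Phi> 5 3) = 0" by (rule so) (simp_all add: Kmem Lv Kmem[unfolded One_nat_def] Lv[unfolded One_nat_def])
  have o30: "cinner_on K (\<Phi> 6 3) (\<Phi> 5 3) = 0" by (rule co) (simp_all add: Kmem Lv Kmem[unfolded One_nat_def] Lv[unfolded One_nat_def])
  have o31: "cinner_on K (\<Phi> 4 1) (\<Phi> 6 1) = 0" by (rule co) (simp_all add: Kmem Lv Kmem[unfolded One_nat_def] Lv[unfolded One_nat_def])
  have o32: "cinner_on K (\<Phi> 4 3) (\<Phi> 6 1) = 0" by (rule so) (simp_all add: Kmem Lv Kmem[unfolded One_nat_def] Lv[unfolded One_nat_def])
  have o33: "cinner_on K (\<Phi> 5 1) (\<Phi> 6 1) = 0" by (rule co) (simp_all add: Kmem Lv Kmem[unfolded One_nat_def] Lv[unfolded One_nat_def])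
  have o34: "cinner_on K (\<Phi> 5 2) (\<Phi> 6 1) = 0" by (rule so) (simp_all add: Kmem Lv Kmem[unfolded One_nat_def] Lv[unfolded One_nat_def])
  have o35: "cinner_on K (\<Phi> 6 2) (\<Phi> 6 1) = 0" by (rule ro) (simp_all add: Kmem Lv Kmem[unfolded One_nat_def] Lv[unfolded One_nat_def])
  have o36: "cinner_on K (\<Phi> 6 3) (\<Phi> 6 1) = 0" by (rule ro) (simp_all add: Kmem Lv Kmem[unfolded One_nat_def] Lv[unfolded One_nat_def])
  have o37: "cinner_on K (\<Phi> 4 1) (\<Phi> 4 3) = 0" by (rule ro) (simp_all add: Kmem Lv Kmem[unfolded One_nat_def] Lv[unfolded One_nat_def])
  have o38: "cinner_on K (\<Phi> 4 2) (\<Phi> 4 3) = 0" by (rule ro) (simp_all add: Kmem Lv Kmem[unfolded One_nat_def] Lv[unfolded One_nat_def])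
  have o39: "cinner_on K (\<Phi> 5 2) (\<Phi> 4 3) = 0" by (rule so) (simp_all add: Kmem Lv Kmem[unfolded One_nat_def] Lv[unfolded One_nat_def])
  have o40: "cinner_on K (\<Phi> 5 3) (\<Phi> 4 3) = 0" by (rule co) (simp_all add: Kmem Lv Kmem[unfolded One_nat_def] Lv[unfolded One_nat_def])
  have o41: "cinner_on K (\<Phi> 6 1) (\<Phi> 4 3) = 0" by (rule so) (simp_all add: Kmem Lv Kmem[unfolded One_nat_def] Lv[unfolded One_nat_def])
  have o42: "cinner_on K (\<Phi> 6 3) (\<Phi> 4 3) = 0" by (rule co) (simp_all add: Kmem Lv Kmem[unfolded One_nat_def] Lv[unfolded One_nat_def])
  have o43: "cinner_on K (\<Phi> 4 1) (\<Phi> 5 1) = 0" by (rule co) (simp_all add: Kmem Lv Kmem[unfolded One_nat_def] Lv[unfolded One_nat_def])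
  have o44: "cinner_on K (\<Phi> 4 2) (\<Phi> 5 1) = 0" by (rule so) (simp_all add: Kmem Lv Kmem[unfolded One_nat_def] Lv[unfolded One_nat_def])
  have o45: "cinner_on K (\<Phi> 5 2) (\<Phi> 5 1) = 0" by (rule ro) (simp_all add: Kmem Lv Kmem[unfolded One_nat_def] Lv[unfolded One_nat_def])
  have o46: "cinner_on K (\<Phi> 5 3) (\<Phi> 5 1) = 0" by (rule ro) (simp_all add: Kmem Lv Kmem[unfolded One_nat_def] Lv[unfolded One_nat_def])
  have o47: "cinner_on K (\<Phi> 6 1) (\<Phi> 5 1) = 0" by (rule co) (simp_all add: Kmem Lv Kmem[unfolded One_nat_def] Lv[unfolded One_nat_def])
  have o48: "cinner_on K (\<Phi> 6 3) (\<Phi> 5 1) = 0" by (rule so) (simp_all add: Kmem Lv Kmem[unfolded One_nat_def] Lv[unfolded One_nat_def])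
  have o49: "cinner_on K (\<Phi> 4 1) (\<Phi> 6 2) = 0" by (rule so) (simp_all add: Kmem Lv Kmem[unfolded One_nat_def] Lv[unfolded One_nat_def])
  have o50: "cinner_on K (\<Phi> 4 2) (\<Phi> 6 2) = 0" by (rule co) (simp_all add: Kmem Lv Kmem[unfolded One_nat_def] Lv[unfolded One_nat_def])
  have o51: "cinner_on K (\<Phi> 5 2) (\<Phi> 6 2) = 0" by (rule co) (simp_all add: Kmem Lv Kmem[unfolded One_nat_def] Lv[unfolded One_nat_def])
  have o52: "cinner_on K (\<Phi> 5 3) (\<Phi> 6 2) = 0" by (rule so) (simp_all add: Kmem Lv Kmem[unfolded One_nat_def] Lv[unfolded One_nat_def])
  have o53: "cinner_on K (\<Phi> 6 1) (\<Phi> 6 2) = 0" by (rule ro) (simp_all add: Kmem Lv Kmem[unfolded One_nat_def] Lv[unfolded One_nat_def])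
  have o54: "cinner_on K (\<Phi> 6 3) (\<Phi> 6 2) = 0" by (rule ro) (simp_all add: Kmem Lv Kmem[unfolded One_nat_def] Lv[unfolded One_nat_def])
  note orth = o1 o2 o3 o4 o5 o6 o7 o8 o9 o10 o11 o12 o13 o14 o15 o16 o17 o18 o19 o20 o21 o22 o23 o24 o25 o26 o27 o28 o29 o30 o31 o32 o33 o34 o35 o36 o37 o38 o39 o40 o41 o42 o43 o44 o45 o46 o47 o48 o49 o50 o51 o52 o53 o54
  have gA: "\<exists>\<alpha> \<beta>. \<alpha> \<noteq> 0 \<and> \<beta> \<noteq> 0 \<and> (\<forall>k\<in>K. \<Phi> 6 3 k = \<alpha> * \<Phi> 4 1 k + \<beta> * \<Phi> 5 2 k)"
  proof (rule group_rel[OF fK])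
    show "\<forall>k\<in>K. 3/2 * \<Phi> 4 1 k = \<Phi> 4 1 k * cinner_on K (\<Phi> 4 1) (\<Phi> 4 1) + \<Phi> 5 2 k * cinner_on K (\<Phi> 5 2) (\<Phi> 4 1) + \<Phi> 6 3 k * cinner_on K (\<Phi> 6 3) (\<Phi> 4 1)"
      using fr[of _ "\<Phi> 4 1"] by (simp add: orth orth[unfolded One_nat_def])
    show "\<forall>k\<in>K. 3/2 * \<Phi> 5 2 k = \<Phi> 4 1 k * cinner_on K (\<Phi> 4 1) (\<Phi> 5 2) + \<Phi> 5 2 k * cinner_on K (\<Phi> 5 2) (\<Phi> 5 2) + \<Phi> 6 3 k * cinner_on K (\<Phi> 6 3) (\<Phi> 5 2)"
      using fr[of _ "\<Phi> 5 2"] by (simp add: orth orth[unfolded One_nat_def])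
    show "\<forall>k\<in>K. 3/2 * \<Phi> 6 3 k = \<Phi> 4 1 k * cinner_on K (\<Phi> 4 1) (\<Phi> 6 3) + \<Phi> 5 2 k * cinner_on K (\<Phi> 5 2) (\<Phi> 6 3) + \<Phi> 6 3 k * cinner_on K (\<Phi> 6 3) (\<Phi> 6 3)"
      using fr[of _ "\<Phi> 6 3"] by (simp add: orth orth[unfolded One_nat_def])
  qed (simp_all add: nrm Kmem Kmem[unfolded One_nat_def])
  have gB: "\<exists>\<alpha> \<beta>. \<alpha> \<noteq> 0 \<and> \<beta> \<noteq> 0 \<and> (\<forall>k\<in>K. \<Phi> 6 1 k = \<alpha> * \<Phi> 4 2 k + \<beta> * \<Phi> 5 3 k)"
  proof (rule group_rel[OF fK])
    show "\<forall>k\<in>K. 3/2 * \<Phi> 4 2 k = \<Phi> 4 2 k * cinner_on K (\<Phi> 4 2) (\<Phi> 4 2) + \<Phi> 5 3 k * cinner_on K (\<Phi> 5 3) (\<Phi> 4 2) + \<Phi> 6 1 k * cinner_on K (\<Phi> 6 1) (\<Phi> 4 2)"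
      using fr[of _ "\<Phi> 4 2"] by (simp add: orth orth[unfolded One_nat_def])
    show "\<forall>k\<in>K. 3/2 * \<Phi> 5 3 k = \<Phi> 4 2 k * cinner_on K (\<Phi> 4 2) (\<Phi> 5 3) + \<Phi> 5 3 k * cinner_on K (\<Phi> 5 3) (\<Phi> 5 3) + \<Phi> 6 1 k * cinner_on K (\<Phi> 6 1) (\<Phi> 5 3)"
      using fr[of _ "\<Phi> 5 3"] by (simp add: orth orth[unfolded One_nat_def])
    show "\<forall>k\<in>K. 3/2 * \<Phi> 6 1 k = \<Phi> 4 2 k * cinner_on K (\<Phi> 4 2) (\<Phi> 6 1) + \<Phi> 5 3 k * cinner_on K (\<Phi> 5 3) (\<Phi> 6 1) + \<Phi> 6 1 k * cinner_on K (\<Phi> 6 1) (\<Phi> 6 1)"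
      using fr[of _ "\<Phi> 6 1"] by (simp add: orth orth[unfolded One_nat_def])
  qed (simp_all add: nrm Kmem Kmem[unfolded One_nat_def])
  have gC: "\<exists>\<alpha> \<beta>. \<alpha> \<noteq> 0 \<and> \<beta> \<noteq> 0 \<and> (\<forall>k\<in>K. \<Phi> 6 2 k = \<alpha> * \<Phi> 4 3 k + \<beta> * \<Phi> 5 1 k)"
  proof (rule group_rel[OF fK])
    show "\<forall>k\<in>K. 3/2 * \<Phi> 4 3 k = \<Phi> 4 3 k * cinner_on K (\<Phi> 4 3) (\<Phi> 4 3) + \<Phi> 5 1 k * cinner_on K (\<Phi> 5 1) (\<Phi> 4 3) + \<Phi> 6 2 k * cinner_on K (\<Phi> 6 2) (\<Phi> 4 3)"
      using fr[of _ "\<Phi> 4 3"] by (simp add: orth orth[unfolded One_nat_def])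
    show "\<forall>k\<in>K. 3/2 * \<Phi> 5 1 k = \<Phi> 4 3 k * cinner_on K (\<Phi> 4 3) (\<Phi> 5 1) + \<Phi> 5 1 k * cinner_on K (\<Phi> 5 1) (\<Phi> 5 1) + \<Phi> 6 2 k * cinner_on K (\<Phi> 6 2) (\<Phi> 5 1)"
      using fr[of _ "\<Phi> 5 1"] by (simp add: orth orth[unfolded One_nat_def])
    show "\<forall>k\<in>K. 3/2 * \<Phi> 6 2 k = \<Phi> 4 3 k * cinner_on K (\<Phi> 4 3) (\<Phi> 6 2) + \<Phi> 5 1 k * cinner_on K (\<Phi> 5 1) (\<Phi> 6 2) + \<Phi> 6 2 k * cinner_on K (\<Phi> 6 2) (\<Phi> 6 2)"
      using fr[of _ "\<Phi> 6 2"] by (simp add: orth orth[unfolded One_nat_def])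
  qed (simp_all add: nrm Kmem Kmem[unfolded One_nat_def])
  obtain alA beA where A: "alA \<noteq> 0" "beA \<noteq> 0" "\<forall>k\<in>K. \<Phi> 6 3 k = alA * \<Phi> 4 1 k + beA * \<Phi> 5 2 k"
    using gA by blast
  have A1: "\<Phi> 6 3 1 = alA * \<Phi> 4 1 1 + beA * \<Phi> 5 2 1"
    using bspec[OF A(3), of 1] Kmem by simp
  have A2: "\<Phi> 6 3 2 = alA * \<Phi> 4 1 2 + beA * \<Phi> 5 2 2"
    using bspec[OF A(3), of 2] Kmem by simp
  have A3: "\<Phi> 5 2 3 = - (alA * \<Phi> 4 1 3) / beA"
    using bspec[OF A(3), of 3] A(2) zeros Kmem by (simp add: field_simps add_eq_0_iff)
  have A4: "\<Phi> 6 3 4 = alA * \<Phi> 4 1 4 + beA * \<Phi> 5 2 4"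
    using bspec[OF A(3), of 4] Kmem by simp
  have A5: "\<Phi> 5 2 5 = - (alA * \<Phi> 4 1 5) / beA"
    using bspec[OF A(3), of 5] A(2) zeros Kmem by (simp add: field_simps add_eq_0_iff)
  have A6: "\<Phi> 6 3 6 = alA * \<Phi> 4 1 6 + beA * \<Phi> 5 2 6"
    using bspec[OF A(3), of 6] Kmem by simp
  obtain alB beB where B: "alB \<noteq> 0" "beB \<noteq> 0" "\<forall>k\<in>K. \<Phi> 6 1 k = alB * \<Phi> 4 2 k + beB * \<Phi> 5 3 k"
    using gB by blast
  have B1: "\<Phi> 5 3 1 = - (alB * \<Phi> 4 2 1) / beB"
    using bspec[OF B(3), of 1] B(2) zeros Kmem by (simp add: field_simps add_eq_0_iff)
  have B2: "\<Phi> 6 1 2 = alB * \<Phi> 4 2 2 + beB * \<Phi> 5 3 2"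
    using bspec[OF B(3), of 2] Kmem by simp
  have B3: "\<Phi> 6 1 3 = alB * \<Phi> 4 2 3 + beB * \<Phi> 5 3 3"
    using bspec[OF B(3), of 3] Kmem by simp
  have B4: "\<Phi> 6 1 4 = alB * \<Phi> 4 2 4 + beB * \<Phi> 5 3 4"
    using bspec[OF B(3), of 4] Kmem by simp
  have B5: "\<Phi> 6 1 5 = alB * \<Phi> 4 2 5 + beB * \<Phi> 5 3 5"
    using bspec[OF B(3), of 5] Kmem by simp
  have B6: "\<Phi> 5 3 6 = - (alB * \<Phi> 4 2 6) / beB"
    using bspec[OF B(3), of 6] B(2) zeros Kmem by (simp add: field_simps add_eq_0_iff)
  obtain alC beC where C: "alC \<noteq> 0" "beC \<noteq> 0" "\<forall>k\<in>K. \<Phi> 6 2 k = alC * \<Phi> 4 3 k + beC * \<Phi> 5 1 k"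
    using gC by blast
  have C1: "\<Phi> 6 2 1 = alC * \<Phi> 4 3 1 + beC * \<Phi> 5 1 1"
    using bspec[OF C(3), of 1] Kmem by simp
  have C2: "\<Phi> 5 1 2 = - (alC * \<Phi> 4 3 2) / beC"
    using bspec[OF C(3), of 2] C(2) zeros Kmem by (simp add: field_simps add_eq_0_iff)
  have C3: "\<Phi> 6 2 3 = alC * \<Phi> 4 3 3 + beC * \<Phi> 5 1 3"
    using bspec[OF C(3), of 3] Kmem by simp
  have C4: "\<Phi> 5 1 4 = - (alC * \<Phi> 4 3 4) / beC"
    using bspec[OF C(3), of 4] C(2) zeros Kmem by (simp add: field_simps add_eq_0_iff)
  have C5: "\<Phi> 6 2 5 = alC * \<Phi> 4 3 5 + beC * \<Phi> 5 1 5"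
    using bspec[OF C(3), of 5] Kmem by simp
  have C6: "\<Phi> 6 2 6 = alC * \<Phi> 4 3 6 + beC * \<Phi> 5 1 6"
    using bspec[OF C(3), of 6] Kmem by simp
  note F = zeros A1 A2 A3 A4 A5 A6 A(1) A(2) B1 B2 B3 B4 B5 B6 B(1) B(2) C1 C2 C3 C4 C5 C6 C(1) C(2)
  define a where "a = (\<lambda>k. if k = 3 \<or> k = 5 then alA * \<Phi> 4 1 k else \<Phi> 6 3 k)"
  define b where "b = (\<lambda>k. if k = 1 \<or> k = 6 then alB * \<Phi> 4 2 k else \<Phi> 6 1 k)"
  define c where "c = (\<lambda>k. if k = 2 \<or> k = 4 then alC * \<Phi> 4 3 k else \<Phi> 6 2 k)"
  define lam where "lam = (\<lambda>i j. if (i, j) = (4::nat, 1::nat) then 1 / alA else if (i, j) = (5, 2) then 1 / beA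
     else if (i, j) = (4, 2) then 1 / alB else if (i, j) = (5, 3) then 1 / beB
     else if (i, j) = (4, 3) then 1 / alC else if (i, j) = (5, 1) then 1 / beC else (1::complex))"
  show ?thesis
    apply (rule exI[of _ a], rule exI[of _ b], rule exI[of _ c], rule exI[of _ lam])
    apply (simp only: list.map hc6)
    apply (simp add: a_def b_def c_def lam_def F F[unfolded One_nat_def] field_simps)
    done
qed

thm_deps mainTheorem13

end
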